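(* Let $K$ be an algebraically closed field of characteristic zero, let $n\geq 3$ and let $\lambda\in K\setminus\{-1\}$. Then every $D\in sl_n(K)$ can be written as $D=[A,B][A,C]+\lambda[A,C][A,B]$ for suitable matrices $A,B,C\in M_n(K)$.
   Context: $[X,Y]=XY-YX$ denotes the commutator, $M_n(K)$ is the algebra of $n\times n$ matrices over $K$, and $sl_n(K)$ is the set of trace zero matrices in $M_n(K)$. *)

theory Defs
  imports "Jordan_Normal_Form.Matrix" "HOL-Computational_Algebra.Polynomial"
begin

definition mat_trace :: "'a::comm_ring_1 mat \<Rightarrow> 'a" where
  "mat_trace A = (\<Sum>i<dim_row A. A $$ (i, i))"

definition commutator :: "'a::comm_ring_1 mat \<Rightarrow> 'a mat \<Rightarrow> 'a mat" where
  "commutator X Y = X * Y - Y * X"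

end

theory Submission
  imports Defs "Jordan_Normal_Form.Schur_Decomposition" "Jordan_Normal_Form.DL_Rank"
begin


lemma mult_entry:
  assumes "A \<in> carrier_mat n m" "B \<in> carrier_mat m k" "i < n" "j < k"
  shows "(A * B) $$ (i,j) = (\<Sum>t<m. A $$ (i,t) * B $$ (t,j))"
  using assms by (auto simp: scalar_prod_def atLeast0LessThan intro!: sum.cong)

definition shiftN :: "nat \<Rightarrow> 'a::comm_ring_1 mat" where
  "shiftN n = mat n n (\<lambda>(i,j). if j = i + 1 then 1 else 0)"

lemma shiftN_carrier[simp]: "shiftN n \<in> carrier_mat n n"
  by (simp add: shiftN_def)

lemma shiftN_dim[simp]: "dim_row (shiftN n) = n" "dim_col (shiftN n) = n"
  by (simp_all add: shiftN_def)

definition Gs :: "'a::comm_ring_1 mat \<Rightarrow> nat \<Rightarrow> nat \<Rightarrow> 'a" where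
  "Gs M i j = (\<Sum>a<i. \<Sum>b<j. if a + j = b + i then M $$ (a,b) else 0)"

lemma Gs_0[simp]: "Gs M i 0 = 0" by (simp add: Gs_def)

lemma Gs_Suc: "Gs M (Suc i) (Suc j) = M $$ (i,j) + Gs M i j"
proof -
  have "Gs M (Suc i) (Suc j) = (\<Sum>a<Suc i. \<Sum>b<Suc j. if a + j = b + i then M $$ (a,b) else 0)"
    by (simp add: Gs_def)
  also have "\<dots> = (\<Sum>a<i. \<Sum>b<Suc j. if a + j = b + i then M $$ (a,b) else 0)
      + (\<Sum>b<Suc j. if i + j = b + i then M $$ (i,b) else 0)"
    by (simp add: sum.lessThan_Suc)
  also have "(\<Sum>b<Suc j. if i + j = b + i then M $$ (i,b) else 0) = M $$ (i,j)"
    by (simp add: sum.lessThan_Suc)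
  also have "(\<Sum>a<i. \<Sum>b<Suc j. if a + j = b + i then M $$ (a,b) else 0) = Gs M i j"
    unfolding Gs_def
  proof (rule sum.cong[OF refl])
    fix a assume "a \<in> {..<i}"
    thus "(\<Sum>b<Suc j. if a + j = b + i then M $$ (a,b) else 0) =
      (\<Sum>b<j. if a + j = b + i then M $$ (a,b) else 0)" by (simp add: sum.lessThan_Suc)
  qed
  finally show ?thesis by simp
qed

lemma Gs_top:
  assumes M: "M \<in> carrier_mat n n" and ut: "upper_triangular M"
    and tr: "(\<Sum>i<n. M $$ (i,i)) = 0" and j: "j < n"
  shows "Gs M n (Suc j) = 0"
proof (cases "Suc j = n")
  case True
  have "Gs M n (Suc j) = (\<Sum>a<n. \<Sum>b<n. if a = b then M $$ (a,b) else 0)"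
    unfolding Gs_def True by (intro sum.cong refl) auto
  also have "\<dots> = (\<Sum>a<n. M $$ (a,a))" by (simp add: sum.delta)
  finally show ?thesis using tr by simp
next
  case False
  have "Gs M n (Suc j) = (\<Sum>a<n. \<Sum>b<Suc j. (0::'a))"
    unfolding Gs_def
  proof (intro sum.cong refl)
    fix a b assume a: "a \<in> {..<n}" and b: "b \<in> {..<Suc j}"
    show "(if a + Suc j = b + n then M $$ (a,b) else 0) = 0"
    proof (cases "a + Suc j = b + n")
      case True
      with False j b have "b < a" by auto
      with ut a M show ?thesis by auto
    qed simp
  qed
  thus ?thesis by simp
qed

lemma adN_exists:
  fixes M :: "'a::comm_ring_1 mat"
  assumes M: "M \<in> carrier_mat n n" and ut: "upper_triangular M"
    and tr: "(\<Sum>i<n. M $$ (i,i)) = 0"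
  shows "\<exists>C \<in> carrier_mat n n. shiftN n * C - C * shiftN n = M"
proof -
  define C where "C = mat n n (\<lambda>(i,j). Gs M i (Suc j))"
  have Cc: "C \<in> carrier_mat n n" by (simp add: C_def)
  have "shiftN n * C - C * shiftN n = M"
  proof (rule eq_matI)
    fix i j assume i: "i < dim_row M" and j: "j < dim_col M"
    with M have i: "i < n" and j: "j < n" by auto
    have NC: "(shiftN n * C) $$ (i,j) = (if Suc i < n then Gs M (Suc i) (Suc j) else 0)"
    proof -
      have "(shiftN n * C) $$ (i,j) = (\<Sum>t<n. (if t = Suc i then 1 else 0) * C $$ (t,j))"
        using i j Cc by (subst mult_entry[of _ n n _ n]) (auto simp: shiftN_def intro!: sum.cong)
      also have "\<dots> = (\<Sum>t<n. if t = Suc i then C $$ (t,j) else 0)"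
        by (intro sum.cong) auto
      also have "\<dots> = (if Suc i < n then Gs M (Suc i) (Suc j) else 0)"
        using j by (simp add: sum.delta' C_def)
      finally show ?thesis .
    qed
    have CN: "(C * shiftN n) $$ (i,j) = Gs M i j"
    proof -
      have "(C * shiftN n) $$ (i,j) = (\<Sum>t<n. C $$ (i,t) * (if j = Suc t then 1 else 0))"
        using i j Cc by (subst mult_entry[of _ n n _ n]) (auto simp: shiftN_def intro!: sum.cong)
      also have "\<dots> = Gs M i j"
      proof (cases j)
        case 0 thus ?thesis by simp
      next
        case (Suc j')
        have "(\<Sum>t<n. C $$ (i,t) * (if j = Suc t then 1 else 0)) = (\<Sum>t<n. if t = j' then C $$ (i,t) else 0)"
          using Suc by (intro sum.cong) auto
        also have "\<dots> = C $$ (i,j')" using Suc j by (simp add: sum.delta')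
        also have "\<dots> = Gs M i j" using Suc i j by (simp add: C_def)
        finally show ?thesis .
      qed
      finally show ?thesis .
    qed
    have "(shiftN n * C - C * shiftN n) $$ (i,j) = (shiftN n * C) $$ (i,j) - (C * shiftN n) $$ (i,j)"
      using i j Cc by (simp add: C_def)
    also have "\<dots> = M $$ (i,j)"
    proof (cases "Suc i < n")
      case True thus ?thesis unfolding NC CN by (simp add: Gs_Suc)
    next
      case False
      hence "Suc i = n" using i by auto
      with Gs_top[OF M ut tr j] Gs_Suc[of M i j] have "M $$ (i,j) + Gs M i j = 0" by simp
      hence "- Gs M i j = M $$ (i,j)" by (metis add_eq_0_iff minus_minus)
      with False show ?thesis unfolding NC CN by simp
    qed
    finally show "(shiftN n * C - C * shiftN n) $$ (i,j) = M $$ (i,j)" .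
  next
    show "dim_row (shiftN n * C - C * shiftN n) = dim_row M" using M Cc by simp
    show "dim_col (shiftN n * C - C * shiftN n) = dim_col M" using M Cc by simp
  qed
  with Cc show ?thesis by blast
qed



lemma tri_sum:
  fixes X Y :: "nat \<Rightarrow> nat \<Rightarrow> 'a::comm_ring_1"
  assumes X: "\<And>a b. b < a \<Longrightarrow> X a b = 0" and Y: "\<And>a b. b < a \<Longrightarrow> Y a b = 0"
    and i: "i < n" and j: "j < n"
  shows "(\<Sum>t<n. X i t * Y t j) = (if i < j then X i i * Y i j + X i j * Y j j +
      (\<Sum>t\<in>{i<..<j}. X i t * Y t j) else if i = j then X i i * Y i i else 0)"
proof -
  have "(\<Sum>t<n. X i t * Y t j) = (\<Sum>t\<in>{i..j}. X i t * Y t j)"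
  proof (rule sum.mono_neutral_right)
    show "\<forall>t\<in>{..<n} - {i..j}. X i t * Y t j = 0"
    proof
      fix t assume "t \<in> {..<n} - {i..j}"
      hence "t < i \<or> j < t" by auto
      thus "X i t * Y t j = 0" using X Y by auto
    qed
  qed (use j in auto)
  also have "\<dots> = (if i < j then X i i * Y i j + X i j * Y j j +
      (\<Sum>t\<in>{i<..<j}. X i t * Y t j) else if i = j then X i i * Y i i else 0)"
  proof (cases "i < j")
    case True
    hence e: "{i..j} = insert i (insert j {i<..<j})" by auto
    show ?thesis unfolding e using True by (simp add: add.assoc)
  next
    case False
    thus ?thesis by (cases "i = j") auto
  qed
  finally show ?thesis .
qed

definition tri_step :: "'a::field \<Rightarrow> (nat \<Rightarrow> 'a) \<Rightarrow> (nat \<Rightarrow> 'a) \<Rightarrow> nat \<Rightarrow> nat \<Rightarrow> 'a \<Rightarrow> 'a \<times> 'a" where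
  "tri_step lam x y i j R = (if x i + lam * x j \<noteq> 0 then (0, R / (x i + lam * x j))
      else (R / (y j + lam * y i), 0))"

function tri_sol :: "'a::field \<Rightarrow> (nat \<Rightarrow> 'a) \<Rightarrow> (nat \<Rightarrow> 'a) \<Rightarrow> 'a mat \<Rightarrow> nat \<Rightarrow> nat \<Rightarrow> 'a \<times> 'a" where
  "tri_sol lam x y D i j = (if i < j then tri_step lam x y i j (D $$ (i,j) -
      (\<Sum>k\<in>{i<..<j}. fst (tri_sol lam x y D i k) * snd (tri_sol lam x y D k j)
         + lam * (snd (tri_sol lam x y D i k) * fst (tri_sol lam x y D k j)))) else (0,0))"
  by pat_completeness auto
termination
  by (relation "measure (\<lambda>(lam,x,y,D,i,j). j - i)") auto

declare tri_sol.simps[simp del]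

definition Xm :: "'a::field \<Rightarrow> (nat \<Rightarrow> 'a) \<Rightarrow> (nat \<Rightarrow> 'a) \<Rightarrow> 'a mat \<Rightarrow> nat \<Rightarrow> 'a mat" where
  "Xm lam x y D n = mat n n (\<lambda>(i,j). if i = j then x i else if i < j then fst (tri_sol lam x y D i j) else 0)"
definition Ym :: "'a::field \<Rightarrow> (nat \<Rightarrow> 'a) \<Rightarrow> (nat \<Rightarrow> 'a) \<Rightarrow> 'a mat \<Rightarrow> nat \<Rightarrow> 'a mat" where
  "Ym lam x y D n = mat n n (\<lambda>(i,j). if i = j then y i else if i < j then snd (tri_sol lam x y D i j) else 0)"

lemma tri_solve:
  fixes D :: "'a::field mat"
  assumes D: "D \<in> carrier_mat n n" and ut: "upper_triangular D"
    and diag: "\<And>i. i < n \<Longrightarrow> (1 + lam) * (x i * y i) = D $$ (i,i)"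
    and cond: "\<And>i j. i < j \<Longrightarrow> j < n \<Longrightarrow> x i + lam * x j \<noteq> 0 \<or> y j + lam * y i \<noteq> 0"
  shows "Xm lam x y D n * Ym lam x y D n + lam \<cdot>\<^sub>m (Ym lam x y D n * Xm lam x y D n) = D"
    "Xm lam x y D n \<in> carrier_mat n n" "Ym lam x y D n \<in> carrier_mat n n"
    "upper_triangular (Xm lam x y D n)" "upper_triangular (Ym lam x y D n)"
    "\<And>i. i < n \<Longrightarrow> Xm lam x y D n $$ (i,i) = x i"
    "\<And>i. i < n \<Longrightarrow> Ym lam x y D n $$ (i,i) = y i"
proof -
  let ?X = "Xm lam x y D n" and ?Y = "Ym lam x y D n"
  define X where "X = (\<lambda>i j. if i = j then x i else if i < j then fst (tri_sol lam x y D i j) else 0)"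
  define Y where "Y = (\<lambda>i j. if i = j then y i else if i < j then snd (tri_sol lam x y D i j) else 0)"
  have Xe: "\<And>i j. i < n \<Longrightarrow> j < n \<Longrightarrow> ?X $$ (i,j) = X i j" by (simp add: Xm_def X_def)
  have Ye: "\<And>i j. i < n \<Longrightarrow> j < n \<Longrightarrow> ?Y $$ (i,j) = Y i j" by (simp add: Ym_def Y_def)
  show Xc: "?X \<in> carrier_mat n n" by (simp add: Xm_def)
  show Yc: "?Y \<in> carrier_mat n n" by (simp add: Ym_def)
  show "upper_triangular ?X" by (rule upper_triangularI) (simp add: Xm_def)
  show "upper_triangular ?Y" by (rule upper_triangularI) (simp add: Ym_def)
  show "\<And>i. i < n \<Longrightarrow> ?X $$ (i,i) = x i" by (simp add: Xm_def)
  show "\<And>i. i < n \<Longrightarrow> ?Y $$ (i,i) = y i" by (simp add: Ym_def)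
  have X0: "\<And>a b. b < a \<Longrightarrow> X a b = 0" by (simp add: X_def)
  have Y0: "\<And>a b. b < a \<Longrightarrow> Y a b = 0" by (simp add: Y_def)
  show "?X * ?Y + lam \<cdot>\<^sub>m (?Y * ?X) = D"
  proof (rule eq_matI)
    fix i j assume "i < dim_row D" "j < dim_col D"
    with D have i: "i < n" and j: "j < n" by auto
    have XY: "(?X * ?Y) $$ (i,j) = (\<Sum>t<n. X i t * Y t j)"
      using Xc Yc i j by (simp add: mult_entry[OF Xc Yc i j] Xe Ye)
    have YX: "(?Y * ?X) $$ (i,j) = (\<Sum>t<n. Y i t * X t j)"
      using Xc Yc i j by (simp add: mult_entry[OF Yc Xc i j] Xe Ye)
    have lhs: "(?X * ?Y + lam \<cdot>\<^sub>m (?Y * ?X)) $$ (i,j) = (\<Sum>t<n. X i t * Y t j) + lam * (\<Sum>t<n. Y i t * X t j)"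
      using Xc Yc i j XY YX by simp
    note T1 = tri_sum[of X Y, OF X0 Y0 i j] and T2 = tri_sum[of Y X, OF Y0 X0 i j]
    have "(\<Sum>t<n. X i t * Y t j) + lam * (\<Sum>t<n. Y i t * X t j) = D $$ (i,j)"
    proof (cases "i < j")
      case True
      define S where "S = (\<Sum>k\<in>{i<..<j}. fst (tri_sol lam x y D i k) * snd (tri_sol lam x y D k j)
         + lam * (snd (tri_sol lam x y D i k) * fst (tri_sol lam x y D k j)))"
      have S: "(\<Sum>t\<in>{i<..<j}. X i t * Y t j) + lam * (\<Sum>t\<in>{i<..<j}. Y i t * X t j) = S"
        unfolding S_def sum_distrib_left sum.distrib[symmetric]
        by (rule sum.cong) (auto simp: X_def Y_def)
      have ts: "tri_sol lam x y D i j = tri_step lam x y i j (D $$ (i,j) - S)"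
        using True by (subst tri_sol.simps) (simp add: S_def)
      have key: "(x i + lam * x j) * snd (tri_sol lam x y D i j) + (y j + lam * y i) * fst (tri_sol lam x y D i j)
          = D $$ (i,j) - S"
        unfolding ts tri_step_def using cond[OF True j] by auto
      have "(\<Sum>t<n. X i t * Y t j) + lam * (\<Sum>t<n. Y i t * X t j) = X i i * Y i j + X i j * Y j j + (\<Sum>t\<in>{i<..<j}. X i t * Y t j) +
          lam * (Y i i * X i j + Y i j * X j j + (\<Sum>t\<in>{i<..<j}. Y i t * X t j))"
        using T1 T2 True by simp
      also have "\<dots> = (x i + lam * x j) * snd (tri_sol lam x y D i j) + (y j + lam * y i) * fst (tri_sol lam x y D i j)
          + ((\<Sum>t\<in>{i<..<j}. X i t * Y t j) + lam * (\<Sum>t\<in>{i<..<j}. Y i t * X t j))"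
        using True by (simp add: X_def Y_def algebra_simps)
      also have "\<dots> = D $$ (i,j)" unfolding S key by simp
      finally show ?thesis .
    next
      case False
      show ?thesis
      proof (cases "i = j")
        case True
        thus ?thesis using T1 T2 diag[OF i] by (simp add: X_def Y_def algebra_simps)
      next
        case False
        with \<open>\<not> i < j\<close> have "j < i" by auto
        with ut i D have "D $$ (i,j) = 0" by auto
        thus ?thesis using T1 T2 False \<open>\<not> i < j\<close> by simp
      qed
    qed
    thus "(?X * ?Y + lam \<cdot>\<^sub>m (?Y * ?X)) $$ (i,j) = D $$ (i,j)" unfolding lhs .
  qed (use D Xc Yc in auto)
qed




definition good_sol :: "nat \<Rightarrow> 'a::field \<Rightarrow> (nat \<Rightarrow> 'a) \<Rightarrow> (nat \<Rightarrow> 'a) \<Rightarrow> (nat \<Rightarrow> 'a) \<Rightarrow> bool" where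
  "good_sol n lam e x y \<longleftrightarrow> (\<Sum>i<n. x i) = 0 \<and> (\<Sum>i<n. y i) = 0 \<and> (\<forall>i<n. x i * y i = e i) \<and>
     (\<forall>i j. i < j \<longrightarrow> j < n \<longrightarrow> e i = e j \<longrightarrow> x i + lam * x j \<noteq> 0 \<or> y j + lam * y i \<noteq> 0)"

lemma scalar_zero_case:
  fixes e :: "nat \<Rightarrow> 'a::field_char_0"
  assumes n: "n \<ge> 3" and lam: "lam \<noteq> -1" and tr: "(\<Sum>i<n. e i) = 0"
    and z: "z < n" "e z = 0"
  shows "\<exists>x y. good_sol n lam e x y"
proof -
  define Zs where "Zs = {t. t < n \<and> e t = 0}"
  have finZ: "finite Zs" and neZ: "Zs \<noteq> {}" using z by (auto simp: Zs_def)
  define zs where "zs = (if lam * (of_nat n - 1) = 1 then Min Zs else Max Zs)"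
  have zsZ: "zs \<in> Zs" unfolding zs_def using finZ neZ by auto
  hence zsn: "zs < n" and ezs: "e zs = 0" by (auto simp: Zs_def)
  define x where "x = (\<lambda>t. 1 - (if t = zs then (of_nat n :: 'a) else 0))"
  have l1: "1 + lam \<noteq> 0" using lam by (metis add.commute add_eq_0_iff)
  have sx: "(\<Sum>i<n. x i) = 0"
    unfolding x_def sum_subtractf using zsn by (simp add: sum.delta)
  have prod: "\<forall>i<n. x i * e i = e i" using ezs by (auto simp: x_def)
  have pairs: "\<forall>i j. i < j \<longrightarrow> j < n \<longrightarrow> e i = e j \<longrightarrow> x i + lam * x j \<noteq> 0 \<or> e j + lam * e i \<noteq> 0"
  proof (intro allI impI)
    fix i j assume ij: "i < j" and jn: "j < n" and eij: "e i = e j"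
    show "x i + lam * x j \<noteq> 0 \<or> e j + lam * e i \<noteq> 0"
    proof (cases "i = zs")
      case True
      with eij ezs jn have jZ: "j \<in> Zs" by (auto simp: Zs_def)
      have "j \<le> Max Zs" using finZ jZ by auto
      with ij True have "zs \<noteq> Max Zs" by auto
      hence c: "lam * (of_nat n - 1) = 1" unfolding zs_def by (auto split: if_splits)
      have "x i + lam * x j = 1 - of_nat n + lam" using True ij by (simp add: x_def)
      moreover have "1 - of_nat n + lam \<noteq> 0"
      proof
        assume "1 - of_nat n + lam = 0"
        hence "lam = of_nat n - 1" by (simp add: algebra_simps)
        with c have "(of_nat n - 1) * (of_nat n - 1) = (1::'a)" by simp
        moreover have "(of_nat n - 1 :: 'a) = of_nat (n - 1)" using n by (simp add: of_nat_diff)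
        ultimately have "of_nat ((n - 1) * (n - 1)) = (of_nat 1 :: 'a)" by simp
        hence "(n - 1) * (n - 1) = 1" by (simp only: of_nat_eq_iff)
        with n show False by (simp add: mult_eq_1_iff)
      qed
      ultimately show ?thesis by simp
    next
      case False
      show ?thesis
      proof (cases "j = zs")
        case True
        with eij ezs ij jn have iZ: "i \<in> Zs" by (auto simp: Zs_def)
        have "Min Zs \<le> i" using finZ iZ by auto
        with ij True have "zs \<noteq> Min Zs" by auto
        hence c: "lam * (of_nat n - 1) \<noteq> 1" unfolding zs_def by (auto split: if_splits)
        have "x i + lam * x j = 1 - lam * (of_nat n - 1)" using True ij by (simp add: x_def algebra_simps)
        with c show ?thesis by auto
      next
        case False
        with \<open>i \<noteq> zs\<close> have "x i + lam * x j = 1 + lam" by (simp add: x_def)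
        with l1 show ?thesis by simp
      qed
    qed
  qed
  have "good_sol n lam e x e" unfolding good_sol_def using sx tr prod pairs by auto
  thus ?thesis by blast
qed



lemma quad_root:
  fixes a b c :: "'a::alg_closed_field"
  assumes "a \<noteq> 0 \<or> b \<noteq> 0"
  shows "\<exists>u. a * u^2 + b * u + c = 0"
proof -
  let ?p = "[:c, b, a:]"
  have "degree ?p > 0"
  proof (cases "a = 0")
    case True
    with assms have "coeff ?p 1 \<noteq> 0" by simp
    from le_degree[OF this] show ?thesis by simp
  next
    case False
    hence "coeff ?p 2 \<noteq> 0" by (simp add: numeral_2_eq_2)
    from le_degree[OF this] show ?thesis by simp
  qed
  from alg_closed_imp_poly_has_root[OF this] obtain u where "poly ?p u = 0" by blast
  hence "a * u^2 + b * u + c = 0" by (simp add: algebra_simps power2_eq_square)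
  thus ?thesis by blast
qed

lemma scalar_distinct_case:
  fixes e :: "nat \<Rightarrow> 'a::{alg_closed_field,field_char_0}"
  assumes n: "n \<ge> 3" and tr: "(\<Sum>i<n. e i) = 0"
    and nz: "\<forall>i<n. e i \<noteq> 0"
    and dist: "\<forall>i j. i < j \<longrightarrow> j < n \<longrightarrow> e i \<noteq> e j"
  shows "\<exists>x y. good_sol n lam e x y"
proof -
  obtain n' where n': "n = Suc (Suc n')" and n'1: "n' \<ge> 1" using n by (cases n; cases "n - 1") auto
  define m :: 'a where "m = of_nat n'"
  have m0: "m \<noteq> 0" using n'1 by (simp add: m_def)
  define e0 where "e0 = e 0"
  define e1 where "e1 = e 1"
  have e0: "e0 \<noteq> 0" and e1: "e1 \<noteq> 0" using nz n' by (auto simp: e0_def e1_def)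
  define s where "s = e0 + e1"
  have "s \<noteq> 0 \<or> s * m + e1 - e0 \<noteq> 0"
  proof (cases "s = 0")
    case True
    hence "e1 = - e0" by (simp add: s_def add_eq_0_iff)
    hence eq: "s * m + e1 - e0 = - 2 * e0" using True by simp
    have "- 2 * e0 \<noteq> 0" using e0 by simp
    with eq show ?thesis by (simp only:) simp
  qed simp
  from quad_root[OF this] obtain u where Q: "s * u^2 + (s * m + e1 - e0) * u + (- e0 * m) = 0" by blast
  have u0: "u \<noteq> 0" using Q e0 m0 by auto
  define w where "w = - m - u"
  have w0: "w \<noteq> 0"
  proof
    assume "w = 0"
    hence "u = - m" by (simp add: w_def)
    with Q have "- e1 * m = 0" by (simp add: algebra_simps power2_eq_square)
    with e1 m0 show False by simp
  qed
  define x where "x = (\<lambda>t::nat. if t = 0 then u else if t = 1 then w else (1::'a))"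
  define y where "y = (\<lambda>t::nat. e t / x t)"
  have x0: "x t \<noteq> 0" for t using u0 w0 by (simp add: x_def)
  have sx: "(\<Sum>i<n. x i) = u + w + m"
    unfolding n' sum.lessThan_Suc_shift by (simp add: x_def m_def)
  hence sx: "(\<Sum>i<n. x i) = 0" by (simp add: w_def)
  define R where "R = (\<Sum>i<n'. e (Suc (Suc i)))"
  have h: "e0 + (e1 + R) = 0"
    using tr unfolding n' sum.lessThan_Suc_shift by (simp add: e0_def e1_def R_def)
  have "R = (e0 + (e1 + R)) - e0 - e1" by (simp add: algebra_simps)
  with h have rest: "(\<Sum>i<n'. e (Suc (Suc i))) = - e0 - e1" by (simp add: R_def)
  have sy: "(\<Sum>i<n. y i) = e0 / u + e1 / w + (\<Sum>i<n'. e (Suc (Suc i)))"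
    unfolding n' sum.lessThan_Suc_shift by (simp add: y_def x_def e0_def e1_def)
  have "e0 / u + e1 / w - e0 - e1 = 0"
  proof -
    have "e0 / u + e1 / w - e0 - e1 = (e0 * w + e1 * u - (e0 + e1) * u * w) / (u * w)"
      using u0 w0 by (simp add: field_simps)
    also have "e0 * w + e1 * u - (e0 + e1) * u * w = s * u^2 + (s * m + e1 - e0) * u + (- e0 * m)"
      by (simp add: w_def s_def algebra_simps power2_eq_square)
    finally show ?thesis using Q by simp
  qed
  hence sy: "(\<Sum>i<n. y i) = 0" using sy rest by (simp add: algebra_simps)
  have "good_sol n lam e x y" unfolding good_sol_def
    using sx sy x0 dist by (auto simp: y_def)
  thus ?thesis by blast
qed



lemma scalar_rep_case:
  fixes e :: "nat \<Rightarrow> 'a::{alg_closed_field,field_char_0}"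
  assumes n: "n \<ge> 3" and lam: "lam \<noteq> -1" and tr: "(\<Sum>i<n. e i) = 0"
    and nz: "\<forall>i<n. e i \<noteq> 0"
    and rep: "i1 < j1" "j1 < n" "e i1 = e j1"
  shows "\<exists>x y. good_sol n lam e x y"
proof -
  define v where "v = e i1"
  have v0: "v \<noteq> 0" using nz rep by (auto simp: v_def)
  define K where "K = {t. t < n \<and> e t = v}"
  define L where "L = {t. t < n \<and> e t \<noteq> v}"
  have finK: "finite K" and finL: "finite L" by (auto simp: K_def L_def)
  have KL: "{..<n} = K \<union> L" "K \<inter> L = {}" by (auto simp: K_def L_def)
  define k where "k = card K"
  define l where "l = card L"
  have kl: "k + l = n" unfolding k_def l_def using card_Un_disjoint[OF finK finL KL(2)] KL(1) by (metis card_lessThan)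
  have "{i1, j1} \<subseteq> K" using rep by (auto simp: K_def v_def)
  from card_mono[OF finK this] rep have k2: "k \<ge> 2" by (simp add: k_def)
  have l1: "l \<ge> 1"
  proof (rule ccontr)
    assume "\<not> l \<ge> 1"
    hence "card L = 0" unfolding l_def by simp
    hence "L = {}" using finL by simp
    hence "\<forall>t<n. e t = v" by (auto simp: L_def)
    hence "(\<Sum>i<n. e i) = of_nat n * v" by simp
    with tr n v0 show False by simp
  qed
  have splitsum: "(\<Sum>t<n. f t) = (\<Sum>t\<in>K. f t) + (\<Sum>t\<in>L. f t)" for f :: "nat \<Rightarrow> 'a"
    unfolding KL(1) by (rule sum.union_disjoint[OF finK finL KL(2)])
  have sK: "(\<Sum>t\<in>K. e t) = of_nat k * v" unfolding k_def by (simp add: K_def)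
  have sL: "(\<Sum>t\<in>L. e t) = - (of_nat k * v)" using tr splitsum[of e] sK by (simp add: add_eq_0_iff)
  define kk :: 'a where "kk = of_nat k"
  define ll :: 'a where "ll = of_nat l"
  define m where "m = kk + ll - 2"
  have kk0: "kk \<noteq> 0" and kk1: "kk - 1 \<noteq> 0" and ll0: "ll \<noteq> 0" using k2 l1
    by (auto simp: kk_def ll_def)
  have "kk \<noteq> 0 \<or> kk * m \<noteq> 0" using kk0 by simp
  from quad_root[OF this, of "- ll"] obtain u1 where Q1: "kk * u1^2 + kk * m * u1 + - ll = 0" by blast
  define u2 where "u2 = - m - u1"
  have Q2: "kk * u2^2 + kk * m * u2 + - ll = 0"
    using Q1 unfolding u2_def by (simp add: algebra_simps power2_eq_square)
  have u12: "u1 \<noteq> u2"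
  proof
    assume "u1 = u2"
    hence mu: "m = - 2 * u1" by (simp add: u2_def algebra_simps)
    have "- kk * u1^2 - ll = kk * u1^2 + kk * m * u1 + - ll" using mu by (simp add: algebra_simps power2_eq_square)
    with Q1 have h0: "- kk * u1^2 - ll = 0" by simp
    have "kk * u1^2 - (- ll) = - (- kk * u1^2 - ll)" by (simp add: algebra_simps)
    with h0 have q: "kk * u1^2 = - ll" by (simp add: eq_neg_iff_add_eq_0)
    have "kk * m^2 + 4 * ll = 4 * (kk * u1^2) + 4 * ll" using mu by (simp add: algebra_simps power2_eq_square)
    also have "\<dots> = 0" using q by simp
    finally have z: "kk * m^2 + 4 * ll = 0" .
    have "m = of_nat (n - 2)" using n unfolding kl[symmetric] by (simp add: m_def kk_def ll_def of_nat_diff)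
    hence "kk * m^2 + 4 * ll = of_nat (k * (n - 2)^2 + 4 * l)" by (simp add: kk_def ll_def)
    with z have "(of_nat (k * (n - 2)^2 + 4 * l) :: 'a) = 0" by metis
    hence "k * (n - 2)^2 + 4 * l = 0" by (simp only: of_nat_eq_0_iff)
    with l1 show False by simp
  qed
  define g where "g = (\<lambda>u. (kk - 1 - lam) * u - lam * ll)"
  obtain u where Q: "kk * u^2 + kk * m * u + - ll = 0" and gu: "g u \<noteq> 0"
  proof (cases "g u1 = 0")
    case False with Q1 that show ?thesis by blast
  next
    case True
    have "g u2 \<noteq> 0"
    proof
      assume "g u2 = 0"
      with True have "(kk - 1 - lam) * (u1 - u2) = 0" by (simp add: g_def algebra_simps)
      with u12 have c: "kk - 1 - lam = 0" by simp
      with True have "(kk - 1) * ll = 0" by (simp add: g_def)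
      with kk1 ll0 show False by simp
    qed
    with Q2 that show ?thesis by blast
  qed
  have u0: "u \<noteq> 0" using Q ll0 by auto
  have ul: "- ll - u \<noteq> 0"
  proof
    assume "- ll - u = 0"
    hence "u = - ll" by simp
    with Q have "ll * (kk * ll - kk * m - 1) = 0" by (simp add: algebra_simps power2_eq_square)
    moreover have "kk * ll - kk * m - 1 = - ((kk - 1) * (kk - 1))" by (simp add: m_def algebra_simps)
    ultimately show False using ll0 kk1 by simp
  qed
  define xi where "xi = (- ll - u) / (kk - 1)"
  have xi0: "xi \<noteq> 0" using ul kk1 by (simp add: xi_def)
  have kxi: "(kk - 1) * xi = - ll - u" using kk1 by (simp add: xi_def)
  define i0 where "i0 = Min K"
  have i0K: "i0 \<in> K" unfolding i0_def using finK rep by (intro Min_in) (auto simp: K_def v_def)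
  define x where "x = (\<lambda>t::nat. if t = i0 then u else if e t = v then xi else 1)"
  define y where "y = (\<lambda>t::nat. e t / x t)"
  have x0: "x t \<noteq> 0" for t using u0 xi0 by (simp add: x_def)
  have ei0: "e i0 = v" using i0K by (simp add: K_def)
  have sumK: "(\<Sum>t\<in>K. f t) = f i0 + (\<Sum>t\<in>K - {i0}. f t)" for f :: "nat \<Rightarrow> 'a"
    using sum.remove[OF finK i0K] .
  have cK: "card (K - {i0}) = k - 1" using i0K finK by (simp add: k_def)
  have xK: "(\<Sum>t\<in>K - {i0}. x t) = (kk - 1) * xi"
  proof -
    have "(\<Sum>t\<in>K - {i0}. x t) = (\<Sum>t\<in>K - {i0}. xi)" by (rule sum.cong) (auto simp: x_def K_def)
    also have "\<dots> = of_nat (k - 1) * xi" using cK by simp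
    finally show ?thesis using k2 by (simp add: kk_def of_nat_diff)
  qed
  have xL: "(\<Sum>t\<in>L. x t) = ll"
  proof -
    have "(\<Sum>t\<in>L. x t) = (\<Sum>t\<in>L. 1)" by (rule sum.cong) (use ei0 in \<open>auto simp: x_def L_def\<close>)
    thus ?thesis by (simp add: ll_def l_def)
  qed
  have sx: "(\<Sum>t<n. x t) = 0"
    unfolding splitsum sumK xK xL kxi by (simp add: x_def)
  have yK: "(\<Sum>t\<in>K - {i0}. y t) = (kk - 1) * (v / xi)"
  proof -
    have "(\<Sum>t\<in>K - {i0}. y t) = (\<Sum>t\<in>K - {i0}. v / xi)" by (rule sum.cong) (auto simp: y_def x_def K_def)
    also have "\<dots> = of_nat (k - 1) * (v / xi)" using cK by simp
    finally show ?thesis using k2 by (simp add: kk_def of_nat_diff)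
  qed
  have yL: "(\<Sum>t\<in>L. y t) = - (kk * v)"
  proof -
    have "(\<Sum>t\<in>L. y t) = (\<Sum>t\<in>L. e t)" by (rule sum.cong) (use ei0 in \<open>auto simp: y_def x_def L_def\<close>)
    thus ?thesis using sL by (simp add: kk_def)
  qed
  have key: "1 / u + (kk - 1) / xi = kk"
  proof -
    have e1: "(kk - 1) / xi = (kk - 1) * (kk - 1) / (- ll - u)" using kk1 ul by (simp add: xi_def)
    define w where "w = - ll - u"
    have w0: "w \<noteq> 0" using ul by (simp add: w_def)
    have f1: "1 / u + (kk - 1) * (kk - 1) / w = (w + (kk - 1) * (kk - 1) * u) / (u * w)"
      using u0 w0 by (simp add: field_simps)
    have "w + (kk - 1) * (kk - 1) * u - kk * (u * w) = kk * u^2 + kk * m * u + - ll"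
      by (simp add: w_def m_def algebra_simps power2_eq_square)
    hence "w + (kk - 1) * (kk - 1) * u = kk * (u * w)" using Q by simp
    hence "1 / u + (kk - 1) * (kk - 1) / w = kk" unfolding f1 using u0 w0 by simp
    thus ?thesis using e1 by (simp add: w_def)
  qed
  have sy: "(\<Sum>t<n. y t) = 0"
  proof -
    have "(\<Sum>t<n. y t) = v / u + (kk - 1) * (v / xi) - kk * v"
      unfolding splitsum sumK yK yL by (simp add: y_def x_def ei0)
    also have "\<dots> = v * (1 / u + (kk - 1) / xi - kk)" by (simp add: algebra_simps)
    also have "\<dots> = 0" using key by simp
    finally show ?thesis .
  qed
  have l1': "1 + lam \<noteq> 0" using lam by (metis add.commute add_eq_0_iff)
  have pairs: "\<forall>i j. i < j \<longrightarrow> j < n \<longrightarrow> e i = e j \<longrightarrow> x i + lam * x j \<noteq> 0 \<or> y j + lam * y i \<noteq> 0"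
  proof (intro allI impI)
    fix i j assume ij: "i < j" and jn: "j < n" and eij: "e i = e j"
    have "x i + lam * x j \<noteq> 0"
    proof (cases "e i = v")
      case True
      hence iK: "i \<in> K" using ij jn by (auto simp: K_def)
      have "i0 \<le> i" unfolding i0_def using finK iK by simp
      hence ji0: "j \<noteq> i0" using ij by auto
      have ejv: "e j = v" using True eij by simp
      show ?thesis
      proof (cases "i = i0")
        case True
        have "x i + lam * x j = u + lam * xi" using True ji0 ejv by (simp add: x_def)
        moreover have "(kk - 1) * (u + lam * xi) = g u"
        proof -
          have "(kk - 1) * (u + lam * xi) = (kk - 1) * u + lam * ((kk - 1) * xi)" by (simp add: algebra_simps)
          also have "\<dots> = (kk - 1) * u + lam * (- ll - u)" unfolding kxi ..
          also have "\<dots> = g u" by (simp add: g_def algebra_simps)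
          finally show ?thesis .
        qed
        ultimately show ?thesis using gu by auto
      next
        case False
        hence "x i + lam * x j = (1 + lam) * xi" using ji0 ejv \<open>e i = v\<close> by (simp add: x_def algebra_simps)
        thus ?thesis using l1' xi0 by simp
      qed
    next
      case False
      hence "i \<noteq> i0" "j \<noteq> i0" "e j \<noteq> v" using ei0 eij by auto
      hence "x i + lam * x j = 1 + lam" using False by (simp add: x_def)
      thus ?thesis using l1' by simp
    qed
    thus "x i + lam * x j \<noteq> 0 \<or> y j + lam * y i \<noteq> 0" by simp
  qed
  have "good_sol n lam e x y" unfolding good_sol_def
    using sx sy x0 pairs by (auto simp: y_def)
  thus ?thesis by blast
qed



lemma scalar_full:
  fixes e :: "nat \<Rightarrow> 'a::{alg_closed_field,field_char_0}"
  assumes n: "n \<ge> 3" and lam: "lam \<noteq> -1" and tr: "(\<Sum>i<n. e i) = 0"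
  shows "\<exists>x y. (\<Sum>i<n. x i) = 0 \<and> (\<Sum>i<n. y i) = 0 \<and> (\<forall>i<n. x i * y i = e i) \<and>
     (\<forall>i j. i < j \<longrightarrow> j < n \<longrightarrow> x i + lam * x j \<noteq> 0 \<or> y j + lam * y i \<noteq> 0)"
proof -
  have "\<exists>x y. good_sol n lam e x y"
  proof (cases "\<exists>z<n. e z = 0")
    case True
    then obtain z where "z < n" "e z = 0" by blast
    from scalar_zero_case[OF n lam tr this] show ?thesis .
  next
    case False
    hence nz: "\<forall>i<n. e i \<noteq> 0" by auto
    show ?thesis
    proof (cases "\<exists>i j. i < j \<and> j < n \<and> e i = e j")
      case True
      then obtain i j where "i < j" "j < n" "e i = e j" by blast
      from scalar_rep_case[OF n lam tr nz this] show ?thesis .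
    next
      case False
      hence "\<forall>i j. i < j \<longrightarrow> j < n \<longrightarrow> e i \<noteq> e j" by blast
      from scalar_distinct_case[OF n tr nz this] show ?thesis .
    qed
  qed
  then obtain x y where g: "good_sol n lam e x y" by blast
  have "\<forall>i j. i < j \<longrightarrow> j < n \<longrightarrow> x i + lam * x j \<noteq> 0 \<or> y j + lam * y i \<noteq> 0"
  proof (intro allI impI)
    fix i j assume ij: "i < j" and jn: "j < n"
    show "x i + lam * x j \<noteq> 0 \<or> y j + lam * y i \<noteq> 0"
    proof (rule ccontr)
      assume "\<not> ?thesis"
      hence a: "x i = - lam * x j" and b: "y j = - lam * y i"
        by (simp_all add: eq_neg_iff_add_eq_0)
      have "e i = x i * y i" using g ij jn by (simp add: good_sol_def)
      also have "\<dots> = x j * y j" unfolding a b by simp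
      also have "\<dots> = e j" using g jn by (simp add: good_sol_def)
      finally have "e i = e j" .
      with g ij jn \<open>\<not> ?thesis\<close> show False unfolding good_sol_def by blast
    qed
  qed
  with g show ?thesis unfolding good_sol_def by blast
qed



lemma invertible_cols:
  fixes b :: "'a::field vec list"
  assumes b: "set b \<subseteq> carrier_vec n" and len: "length b = n" and dist: "distinct b"
    and ind: "\<not> module.lin_dep class_ring (module_vec TYPE('a) n) (set b)"
  shows "\<exists>W'. W' \<in> carrier_mat n n \<and> W' * mat_of_cols n b = 1\<^sub>m n \<and> mat_of_cols n b * W' = 1\<^sub>m n"
proof -
  interpret V: vec_space "TYPE('a)" n .
  let ?W = "mat_of_cols n b"
  have W: "?W \<in> carrier_mat n n" using len by auto
  have cW: "cols ?W = b" using b by simp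
  have "det ?W \<noteq> 0"
  proof
    assume "det ?W = 0"
    from det_0_iff_vec_prod_zero_field[OF W] this obtain u where
      u: "u \<in> carrier_vec n" "u \<noteq> 0\<^sub>v n" "?W *\<^sub>v u = 0\<^sub>v n" by blast
    have "V.lin_dep (set (cols ?W))" by (rule V.lin_depI[OF W u]) (simp add: cW dist)
    with ind cW show False by simp
  qed
  from det_non_zero_imp_unit[OF W this, of "()"]
  have "?W \<in> Units (ring_mat TYPE('a) n ())" .
  then obtain W' where W': "W' \<in> carrier_mat n n" and "W' * ?W = 1\<^sub>m n" "?W * W' = 1\<^sub>m n"
    unfolding Units_def ring_mat_def by auto
  thus ?thesis by blast
qed

lemma conj_back:
  fixes P :: "'a::comm_ring_1 mat"
  assumes P: "P \<in> carrier_mat n n" and Q: "Q \<in> carrier_mat n n" and A: "A \<in> carrier_mat n n"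
    and PQ: "P * Q = 1\<^sub>m n"
  shows "P * (Q * A * P) * Q = A"
proof -
  have QA: "Q * A \<in> carrier_mat n n" using Q A by simp
  have "P * (Q * A * P) * Q = P * ((Q * A * P) * Q)"
    using P QA Q by (simp add: assoc_mult_mat[of _ n n _ n _ n])
  also have "(Q * A * P) * Q = (Q * A) * (P * Q)"
    using P QA Q by (simp add: assoc_mult_mat[of _ n n _ n _ n])
  also have "\<dots> = Q * A" unfolding PQ by (rule right_mult_one_mat[OF QA])
  also have "P * (Q * A) = (P * Q) * A" using P Q A by (simp add: assoc_mult_mat[of _ n n _ n _ n])
  also have "\<dots> = A" unfolding PQ by (rule left_mult_one_mat[OF A])
  finally show ?thesis .
qed

lemma triangularize:
  fixes A :: "'a::alg_closed_field mat"
  assumes "A \<in> carrier_mat n n"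
  shows "\<exists>U P Q. similar_mat_wit A U P Q \<and> upper_triangular U"
  using assms
proof (induct n arbitrary: A)
  case 0
  have "similar_mat_wit A A (1\<^sub>m 0) (1\<^sub>m 0) \<and> upper_triangular A"
    using similar_mat_wit_refl[OF 0] 0 by (auto simp: upper_triangular_def)
  thus ?case by blast
next
  case (Suc n' A)
  let ?N = "Suc n'"
  have A: "A \<in> carrier_mat ?N ?N" by fact
  have "degree (char_poly A) > 0" using degree_monic_char_poly[OF A] by simp
  from alg_closed_imp_poly_has_root[OF this] obtain e where "poly (char_poly A) e = 0" by blast
  hence ev: "eigenvalue A e" using eigenvalue_root_char_poly[OF A] by simp
  define v where "v = find_eigenvector A e"
  from find_eigenvector[OF A ev] have "eigenvector A v e" unfolding v_def .
  hence v: "v \<in> carrier_vec ?N" and v0: "v \<noteq> 0\<^sub>v ?N" and Av: "A *\<^sub>v v = e \<cdot>\<^sub>v v"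
    using A unfolding eigenvector_def by auto
  interpret V: vec_space "TYPE('a)" ?N .
  define b where "b = basis_completion v"
  from V.basis_completion[OF v v0, folded b_def]
  have dist_b: "distinct b" and indep: "\<not> V.lin_dep (set b)" and b: "set b \<subseteq> carrier_vec ?N"
    and hdb: "hd b = v" and len_b: "length b = ?N" by auto
  define W where "W = mat_of_cols ?N b"
  from invertible_cols[OF b len_b dist_b indep, folded W_def] obtain W' where
    W': "W' \<in> carrier_mat ?N ?N" and W'W: "W' * W = 1\<^sub>m ?N" and WW': "W * W' = 1\<^sub>m ?N" by blast
  have W: "W \<in> carrier_mat ?N ?N" using len_b mat_of_cols_carrier(1)[of ?N b] by (simp add: W_def)
  have b0: "b ! 0 = v" using hdb len_b by (cases b) auto
  have colW0: "col W 0 = v" unfolding W_def using b b0 len_b by (subst col_mat_of_cols) auto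
  define A' where "A' = W' * A * W"
  have A': "A' \<in> carrier_mat ?N ?N" using W W' A by (simp add: A'_def)
  have simAA': "similar_mat_wit A A' W W'"
    by (rule similar_mat_witI[of _ _ ?N], insert W W' A A' W'W WW' conj_back[OF W W' A WW'],
        auto simp: A'_def)
  have colA': "col A' 0 = e \<cdot>\<^sub>v unit_vec ?N 0"
  proof -
    have "col A' 0 = (W' * A) *\<^sub>v col W 0" unfolding A'_def using W W' A by (subst col_mult2) auto
    also have "\<dots> = W' *\<^sub>v (A *\<^sub>v v)" unfolding colW0 using W' A v by simp
    also have "\<dots> = e \<cdot>\<^sub>v (W' *\<^sub>v v)" unfolding Av using W' v by (simp add: mult_mat_vec)
    also have "W' *\<^sub>v v = col (W' * W) 0" using W W' by (subst col_mult2) (auto simp: colW0)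
    also have "\<dots> = unit_vec ?N 0" unfolding W'W by simp
    finally show ?thesis .
  qed
  obtain A1 A2 A0 A3 where splitA': "split_block A' 1 1 = (A1,A2,A0,A3)"
    by (cases "split_block A' 1 1") auto
  from A' have "dim_row A' = 1 + n'" "dim_col A' = 1 + n'" by auto
  from split_block[OF splitA' this] have A1: "A1 \<in> carrier_mat 1 1" and A2: "A2 \<in> carrier_mat 1 n'"
    and A0: "A0 \<in> carrier_mat n' 1" and A3: "A3 \<in> carrier_mat n' n'"
    and A'block: "A' = four_block_mat A1 A2 A0 A3" by auto
  have A'0: "A' $$ (i, 0) = (if i = 0 then e else 0)" if "i < ?N" for i
    using arg_cong[OF colA', of "\<lambda>w. w $ i"] that A' by auto
  have A1id: "A1 = mat 1 1 (\<lambda>_. e)"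
    using splitA'[unfolded split_block_def Let_def] A'0[of 0] A' by auto
  have A0id: "A0 = 0\<^sub>m n' 1"
    using splitA'[unfolded split_block_def Let_def] A'0 A' by auto
  from Suc(1)[OF A3] obtain B P3 Q3 where simIH: "similar_mat_wit A3 B P3 Q3" and ut: "upper_triangular B"
    by blast
  from similar_mat_witD2[OF A3 simIH]
  have B: "B \<in> carrier_mat n' n'" and P3: "P3 \<in> carrier_mat n' n'" and Q3: "Q3 \<in> carrier_mat n' n'"
    and PQ3: "P3 * Q3 = 1\<^sub>m n'" by auto
  have A0_eq: "A0 = P3 * A0 * 1\<^sub>m 1" unfolding A0id using P3 by auto
  let ?P' = "four_block_mat (1\<^sub>m 1) (0\<^sub>m 1 n') (0\<^sub>m n' 1) P3"
  let ?Q' = "four_block_mat (1\<^sub>m 1) (0\<^sub>m 1 n') (0\<^sub>m n' 1) Q3"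
  define C where "C = four_block_mat A1 (A2 * P3) A0 B"
  have A2eq: "A2 = 1\<^sub>m 1 * (A2 * P3) * Q3"
    using A2 P3 Q3 PQ3 by (simp add: assoc_mult_mat[of _ 1 n' _ n' _ n'])
  have simA'C: "similar_mat_wit A' C ?P' ?Q'" unfolding A'block C_def
    by (rule similar_mat_wit_four_block[OF similar_mat_wit_refl[OF A1] simIH A2eq A0_eq A1 A3 A0],
      insert A2 P3, auto)
  have ut1: "upper_triangular A1" unfolding A1id by auto
  have utC: "upper_triangular C" unfolding C_def A0id
    by (intro upper_triangular_four_block[OF _ B ut1 ut]) (auto simp: A1id)
  from similar_mat_wit_trans[OF simAA' simA'C] utC show ?case by blast
qed



context
  fixes P Q :: "'a::comm_ring_1 mat" and n :: nat
  assumes P: "P \<in> carrier_mat n n" and Q: "Q \<in> carrier_mat n n" and QP: "Q * P = 1\<^sub>m n"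
begin

lemma conj_mult:
  assumes M: "M \<in> carrier_mat n n" and M': "M' \<in> carrier_mat n n"
  shows "(P * M * Q) * (P * M' * Q) = P * (M * M') * Q"
proof -
  have QPX: "Q * (P * X) = X" if X: "X \<in> carrier_mat n n" for X
  proof -
    have "Q * (P * X) = (Q * P) * X" using Q P X by simp
    also have "\<dots> = X" unfolding QP by (rule left_mult_one_mat[OF X])
    finally show ?thesis .
  qed
  have PM: "P * M \<in> carrier_mat n n" using P M by simp
  have PM': "P * M' \<in> carrier_mat n n" using P M' by simp
  have L: "P * M * Q \<in> carrier_mat n n" using PM Q by simp
  have LP: "(P * M * Q) * P = P * M"
  proof -
    have "(P * M * Q) * P = (P * M) * (Q * P)" using PM Q P by (rule assoc_mult_mat)
    also have "\<dots> = P * M" unfolding QP by (rule right_mult_one_mat[OF PM])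
    finally show ?thesis .
  qed
  have "(P * M * Q) * (P * M' * Q) = ((P * M * Q) * (P * M')) * Q"
    using L PM' Q by (simp add: assoc_mult_mat[of _ n n _ n _ n])
  also have "(P * M * Q) * (P * M') = ((P * M * Q) * P) * M'"
    using L P M' by (simp add: assoc_mult_mat[of _ n n _ n _ n])
  also have "\<dots> = P * (M * M')" unfolding LP using P M M' by (simp add: assoc_mult_mat[of _ n n _ n _ n])
  finally show ?thesis .
qed

lemma conj_minus:
  assumes M: "M \<in> carrier_mat n n" and M': "M' \<in> carrier_mat n n"
  shows "P * M * Q - P * M' * Q = P * (M - M') * Q"
proof -
  have "P * (M - M') = P * M - P * M'" using P M M' by (rule mult_minus_distrib_mat)
  moreover have "(P * M - P * M') * Q = P * M * Q - P * M' * Q"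
    using P M M' Q by (intro minus_mult_distrib_mat) auto
  ultimately show ?thesis by simp
qed

lemma conj_add:
  assumes M: "M \<in> carrier_mat n n" and M': "M' \<in> carrier_mat n n"
  shows "P * M * Q + P * M' * Q = P * (M + M') * Q"
proof -
  have "P * (M + M') = P * M + P * M'" using P M M' by (rule mult_add_distrib_mat)
  moreover have "(P * M + P * M') * Q = P * M * Q + P * M' * Q"
    using P M M' Q by (intro add_mult_distrib_mat) auto
  ultimately show ?thesis by simp
qed

lemma conj_smult:
  assumes M: "M \<in> carrier_mat n n"
  shows "k \<cdot>\<^sub>m (P * M * Q) = P * (k \<cdot>\<^sub>m M) * Q"
proof -
  have "P * (k \<cdot>\<^sub>m M) = k \<cdot>\<^sub>m (P * M)" using P M by (rule mult_smult_distrib)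
  moreover have "(k \<cdot>\<^sub>m (P * M)) * Q = k \<cdot>\<^sub>m (P * M * Q)" using P M Q by (intro mult_smult_assoc_mat) auto
  ultimately show ?thesis by simp
qed

lemma conj_comm:
  assumes M: "M \<in> carrier_mat n n" and M': "M' \<in> carrier_mat n n"
  shows "commutator (P * M * Q) (P * M' * Q) = P * (M * M' - M' * M) * Q"
  unfolding commutator_def conj_mult[OF M M'] conj_mult[OF M' M]
  using M M' by (intro conj_minus) auto

end

lemma trace_comm:
  fixes A :: "'a::comm_ring_1 mat"
  assumes A: "A \<in> carrier_mat n m" and B: "B \<in> carrier_mat m n"
  shows "mat_trace (A * B) = mat_trace (B * A)"
proof -
  have d1: "dim_row (A * B) = n" and d2: "dim_row (B * A) = m" using A B by auto
  have "mat_trace (A * B) = (\<Sum>i<n. \<Sum>k<m. A $$ (i,k) * B $$ (k,i))"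
    unfolding mat_trace_def d1 by (rule sum.cong[OF refl]) (rule mult_entry[OF A B]; simp)
  also have "\<dots> = (\<Sum>k<m. \<Sum>i<n. B $$ (k,i) * A $$ (i,k))"
    by (subst sum.swap) (simp add: mult.commute)
  also have "\<dots> = mat_trace (B * A)"
    unfolding mat_trace_def d2 by (rule sum.cong[OF refl]) (rule mult_entry[OF B A, symmetric]; simp)
  finally show ?thesis .
qed



theorem lemma4p6:
  fixes D :: "'a::{alg_closed_field, field_char_0} mat"
    and n :: nat and l :: 'a
  assumes "n \<ge> 3"
    and "l \<noteq> -1"
    and "D \<in> carrier_mat n n"
    and "mat_trace D = 0"
  shows "\<exists>A B C. A \<in> carrier_mat n n \<and> B \<in> carrier_mat n n \<and> C \<in> carrier_mat n n \<and>
           D = commutator A B * commutator A C + l \<cdot>\<^sub>m (commutator A C * commutator A B)"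
proof -
  note n = assms(1) and lam = assms(2) and Dc = assms(3) and trD = assms(4)
  from triangularize[OF Dc] obtain U P Q where sim: "similar_mat_wit D U P Q"
    and ut: "upper_triangular U" by blast
  from similar_mat_witD2[OF Dc sim] have PQ: "P * Q = 1\<^sub>m n" and QP: "Q * P = 1\<^sub>m n"
    and DU: "D = P * U * Q" and U: "U \<in> carrier_mat n n" and P: "P \<in> carrier_mat n n"
    and Q: "Q \<in> carrier_mat n n" by auto
  have "mat_trace D = mat_trace (Q * (P * U))"
    unfolding DU using P U Q by (intro trace_comm) auto
  also have "Q * (P * U) = (Q * P) * U" using Q P U by simp
  also have "\<dots> = U" unfolding QP using U by simp
  finally have "mat_trace U = 0" using trD by simp
  hence trU: "(\<Sum>i<n. U $$ (i,i)) = 0" using U by (simp add: mat_trace_def)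
  have l1: "1 + l \<noteq> 0" using lam by (metis add.commute add_eq_0_iff)
  define e where "e = (\<lambda>i. U $$ (i,i) / (1 + l))"
  have tre: "(\<Sum>i<n. e i) = 0" unfolding e_def sum_divide_distrib[symmetric] trU by simp
  from scalar_full[OF n lam tre] obtain x y where sx: "(\<Sum>i<n. x i) = 0" and sy: "(\<Sum>i<n. y i) = 0"
    and xy: "\<forall>i<n. x i * y i = e i"
    and cond: "\<forall>i j. i < j \<longrightarrow> j < n \<longrightarrow> x i + l * x j \<noteq> 0 \<or> y j + l * y i \<noteq> 0" by blast
  have diag: "(1 + l) * (x i * y i) = U $$ (i,i)" if "i < n" for i
    using xy that l1 by (simp add: e_def)
  let ?X = "Xm l x y U n" and ?Y = "Ym l x y U n"
  note TS = tri_solve[OF U ut diag cond[rule_format]]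
  have XY: "?X * ?Y + l \<cdot>\<^sub>m (?Y * ?X) = U" and Xc: "?X \<in> carrier_mat n n" and Yc: "?Y \<in> carrier_mat n n"
    and utX: "upper_triangular ?X" and utY: "upper_triangular ?Y"
    and dX: "\<And>i. i < n \<Longrightarrow> ?X $$ (i,i) = x i" and dY: "\<And>i. i < n \<Longrightarrow> ?Y $$ (i,i) = y i"
    using TS by auto
  have trX: "(\<Sum>i<n. ?X $$ (i,i)) = 0" using sx dX by simp
  have trY: "(\<Sum>i<n. ?Y $$ (i,i)) = 0" using sy dY by simp
  from adN_exists[OF Xc utX trX] obtain B0 where B0: "B0 \<in> carrier_mat n n"
    and NB: "shiftN n * B0 - B0 * shiftN n = ?X" by blast
  from adN_exists[OF Yc utY trY] obtain C0 where C0: "C0 \<in> carrier_mat n n"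
    and NC: "shiftN n * C0 - C0 * shiftN n = ?Y" by blast
  define A where "A = P * shiftN n * Q"
  define B where "B = P * B0 * Q"
  define C where "C = P * C0 * Q"
  have N: "shiftN n \<in> carrier_mat n n" by simp
  have cAB: "commutator A B = P * ?X * Q"
    unfolding A_def B_def conj_comm[OF P Q QP N B0] NB ..
  have cAC: "commutator A C = P * ?Y * Q"
    unfolding A_def C_def conj_comm[OF P Q QP N C0] NC ..
  have "commutator A B * commutator A C + l \<cdot>\<^sub>m (commutator A C * commutator A B)
      = P * (?X * ?Y) * Q + l \<cdot>\<^sub>m (P * (?Y * ?X) * Q)"
    unfolding cAB cAC conj_mult[OF P Q QP Xc Yc] conj_mult[OF P Q QP Yc Xc] ..
  also have "l \<cdot>\<^sub>m (P * (?Y * ?X) * Q) = P * (l \<cdot>\<^sub>m (?Y * ?X)) * Q"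
    using Yc Xc by (intro conj_smult[OF P Q QP]) auto
  also have "P * (?X * ?Y) * Q + P * (l \<cdot>\<^sub>m (?Y * ?X)) * Q = P * (?X * ?Y + l \<cdot>\<^sub>m (?Y * ?X)) * Q"
    using Yc Xc by (intro conj_add[OF P Q QP]) auto
  also have "\<dots> = D" unfolding XY DU ..
  finally have "D = commutator A B * commutator A C + l \<cdot>\<^sub>m (commutator A C * commutator A B)" by simp
  moreover have "A \<in> carrier_mat n n" "B \<in> carrier_mat n n" "C \<in> carrier_mat n n"
    using P Q B0 C0 by (auto simp: A_def B_def C_def)
  ultimately show ?thesis by blast
qed


end
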